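(* If $G$ is a graph with no isolated vertices, then $\gamma_{\rm gr}^t(G)\le 2\gamma_{\rm gr}(G)$.
   Context: $N(v)$ denotes the open neighborhood and $N[v]=N(v)\cup\{v\}$ the closed neighborhood of $v$. A sequence $S=(v_1,\ldots,v_k)$ of distinct vertices is a legal open neighborhood sequence if $N(v_i)\setminus \bigcup_{j=1}^{i-1} N(v_j)\neq\emptyset$ for every $i\in\{2,\ldots,k\}$, and a total dominating sequence if moreover $\{v_1,\ldots,v_k\}$ is a total dominating set (every vertex has a neighbor in it); $\gamma_{\rm gr}^t(G)$ is the maximum length of a total dominating sequence. A sequence $S=(v_1,\ldots,v_k)$ of distinct vertices is a legal closed neighborhood sequence if $N[v_i]\setminus \bigcup_{j=1}^{i-1} N[v_j]\neq\emptyset$ for every $i\in\{2,\ldots,k\}$, and a dominating sequence if moreover $\{v_1,\ldots,v_k\}$ is a dominating set (every vertex is in it or has a neighbor in it); the Grundy domination number $\gamma_{\rm gr}(G)$ is the maximum length of a dominating sequence. *)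

theory Defs
  imports Main
begin

definition simple_graph :: "'a set \<Rightarrow> ('a \<Rightarrow> 'a \<Rightarrow> bool) \<Rightarrow> bool" where
  "simple_graph V E \<longleftrightarrow> finite V \<and> (\<forall>u v. E u v \<longrightarrow> u \<in> V \<and> v \<in> V)
     \<and> (\<forall>u v. E u v \<longrightarrow> E v u) \<and> (\<forall>v. \<not> E v v)"

definition open_nbhd :: "'a set \<Rightarrow> ('a \<Rightarrow> 'a \<Rightarrow> bool) \<Rightarrow> 'a \<Rightarrow> 'a set" where
  "open_nbhd V E v = {u \<in> V. E v u}"

definition closed_nbhd :: "'a set \<Rightarrow> ('a \<Rightarrow> 'a \<Rightarrow> bool) \<Rightarrow> 'a \<Rightarrow> 'a set" where
  "closed_nbhd V E v = insert v (open_nbhd V E v)"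

definition no_isolated :: "'a set \<Rightarrow> ('a \<Rightarrow> 'a \<Rightarrow> bool) \<Rightarrow> bool" where
  "no_isolated V E \<longleftrightarrow> (\<forall>v\<in>V. \<exists>u\<in>V. E v u)"

text \<open>Legal open neighborhood sequence (list indices 0-based: condition for all i with 1 <= i).\<close>
definition legal_open_seq :: "'a set \<Rightarrow> ('a \<Rightarrow> 'a \<Rightarrow> bool) \<Rightarrow> 'a list \<Rightarrow> bool" where
  "legal_open_seq V E S \<longleftrightarrow> distinct S \<and> set S \<subseteq> V \<and>
     (\<forall>i. 1 \<le> i \<and> i < length S \<longrightarrow>
        open_nbhd V E (S ! i) - (\<Union>j<i. open_nbhd V E (S ! j)) \<noteq> {})"

definition legal_closed_seq :: "'a set \<Rightarrow> ('a \<Rightarrow> 'a \<Rightarrow> bool) \<Rightarrow> 'a list \<Rightarrow> bool" where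
  "legal_closed_seq V E S \<longleftrightarrow> distinct S \<and> set S \<subseteq> V \<and>
     (\<forall>i. 1 \<le> i \<and> i < length S \<longrightarrow>
        closed_nbhd V E (S ! i) - (\<Union>j<i. closed_nbhd V E (S ! j)) \<noteq> {})"

definition total_dominating_set :: "'a set \<Rightarrow> ('a \<Rightarrow> 'a \<Rightarrow> bool) \<Rightarrow> 'a set \<Rightarrow> bool" where
  "total_dominating_set V E D \<longleftrightarrow> D \<subseteq> V \<and> (\<forall>v\<in>V. \<exists>u\<in>D. E v u)"

definition dominating_set :: "'a set \<Rightarrow> ('a \<Rightarrow> 'a \<Rightarrow> bool) \<Rightarrow> 'a set \<Rightarrow> bool" where
  "dominating_set V E D \<longleftrightarrow> D \<subseteq> V \<and> (\<forall>v\<in>V. v \<in> D \<or> (\<exists>u\<in>D. E v u))"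

definition total_dominating_seq :: "'a set \<Rightarrow> ('a \<Rightarrow> 'a \<Rightarrow> bool) \<Rightarrow> 'a list \<Rightarrow> bool" where
  "total_dominating_seq V E S \<longleftrightarrow> legal_open_seq V E S \<and> total_dominating_set V E (set S)"

definition dominating_seq :: "'a set \<Rightarrow> ('a \<Rightarrow> 'a \<Rightarrow> bool) \<Rightarrow> 'a list \<Rightarrow> bool" where
  "dominating_seq V E S \<longleftrightarrow> legal_closed_seq V E S \<and> dominating_set V E (set S)"

definition grundy_total_dom :: "'a set \<Rightarrow> ('a \<Rightarrow> 'a \<Rightarrow> bool) \<Rightarrow> nat" where
  "grundy_total_dom V E = Max (length ` {S. total_dominating_seq V E S})"

definition grundy_dom :: "'a set \<Rightarrow> ('a \<Rightarrow> 'a \<Rightarrow> bool) \<Rightarrow> nat" where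
  "grundy_dom V E = Max (length ` {S. dominating_seq V E S})"

end

theory Submission
  imports Defs
begin

lemma fin_seqs:
  assumes "finite V"
  shows "finite {S. distinct S \<and> set S \<subseteq> V}"
  using finite_subset_distinct[OF assms] by (simp add: conj_commute)

lemma append_idx_lt: "i < length T \<Longrightarrow> (T @ [w]) ! i = T ! i"
  by (simp add: nth_append)

lemma closed_extend:
  assumes g: "simple_graph V E" and L: "legal_closed_seq V E S"
  shows "\<exists>T. dominating_seq V E T \<and> length S \<le> length T"
proof -
  let ?L = "{S. legal_closed_seq V E S}"
  have fin: "finite ?L"
    by (rule finite_subset[OF _ fin_seqs[of V]]) (use g in \<open>auto simp: legal_closed_seq_def simple_graph_def\<close>)
  have ne: "length ` ?L \<noteq> {}" using L by auto
  obtain T where T: "T \<in> ?L" "length T = Max (length ` ?L)"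
    using Max_in[OF finite_imageI[OF fin] ne] by auto
  have SleT: "length S \<le> length T" using T L fin by (simp add: Max_ge)
  have "dominating_set V E (set T)"
  proof (rule ccontr)
    assume "\<not> dominating_set V E (set T)"
    then obtain w where w: "w \<in> V" "w \<notin> set T" "\<forall>u\<in>set T. \<not> E w u"
      using T(1) by (auto simp: dominating_set_def legal_closed_seq_def)
    have leg: "legal_closed_seq V E (T @ [w])"
      unfolding legal_closed_seq_def
    proof (intro conjI allI impI)
      show "distinct (T @ [w])" using T(1) w by (auto simp: legal_closed_seq_def)
      show "set (T @ [w]) \<subseteq> V" using T(1) w by (auto simp: legal_closed_seq_def)
      fix i assume i: "1 \<le> i \<and> i < length (T @ [w])"
      show "closed_nbhd V E ((T @ [w]) ! i) - (\<Union>j<i. closed_nbhd V E ((T @ [w]) ! j)) \<noteq> {}"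
      proof (cases "i < length T")
        case True
        have eq: "(\<Union>j<i. closed_nbhd V E ((T @ [w]) ! j)) = (\<Union>j<i. closed_nbhd V E (T ! j))"
          using True by (auto simp: nth_append)
        show ?thesis using T(1) i True unfolding eq legal_closed_seq_def by (simp add: nth_append)
      next
        case False
        hence ii: "i = length T" using i by simp
        have "w \<notin> (\<Union>j<i. closed_nbhd V E ((T @ [w]) ! j))"
        proof
          assume "w \<in> (\<Union>j<i. closed_nbhd V E ((T @ [w]) ! j))"
          then obtain j where j: "j < length T" "w \<in> closed_nbhd V E (T ! j)" using ii by (auto simp: nth_append)
          have "T ! j \<in> set T" using j by simp
          moreover have "w \<noteq> T ! j" using w j by auto
          ultimately have "E w (T ! j)" using j g
            by (auto simp: closed_nbhd_def open_nbhd_def simple_graph_def)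
          thus False using w(3) nth_mem[OF j(1)] by blast
        qed
        moreover have "w \<in> closed_nbhd V E ((T @ [w]) ! i)" using ii by (simp add: closed_nbhd_def)
        ultimately show ?thesis by blast
      qed
    qed
    hence "length (T @ [w]) \<le> Max (length ` ?L)" using fin by (metis (mono_tags) Max_ge finite_imageI imageI mem_Collect_eq)
    thus False using T by simp
  qed
  thus ?thesis using T SleT unfolding dominating_seq_def by auto
qed

lemma total_exists:
  assumes g: "simple_graph V E" and ni: "no_isolated V E"
  shows "\<exists>T. total_dominating_seq V E T"
proof -
  let ?L = "{S. legal_open_seq V E S}"
  have fin: "finite ?L"
    by (rule finite_subset[OF _ fin_seqs[of V]]) (use g in \<open>auto simp: legal_open_seq_def simple_graph_def\<close>)
  have ne: "length ` ?L \<noteq> {}" using legal_open_seq_def[of V E "[]"] by auto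
  obtain T where T: "T \<in> ?L" "length T = Max (length ` ?L)"
    using Max_in[OF finite_imageI[OF fin] ne] by auto
  have "total_dominating_set V E (set T)"
  proof (rule ccontr)
    assume "\<not> total_dominating_set V E (set T)"
    then obtain w where w: "w \<in> V" "\<forall>u\<in>set T. \<not> E w u"
      using T(1) by (auto simp: total_dominating_set_def legal_open_seq_def)
    obtain x where x: "x \<in> V" "E w x" using ni w by (auto simp: no_isolated_def)
    have xT: "x \<notin> set T" using x w by auto
    have leg: "legal_open_seq V E (T @ [x])"
      unfolding legal_open_seq_def
    proof (intro conjI allI impI)
      show "distinct (T @ [x])" using T(1) xT by (auto simp: legal_open_seq_def)
      show "set (T @ [x]) \<subseteq> V" using T(1) x by (auto simp: legal_open_seq_def)
      fix i assume i: "1 \<le> i \<and> i < length (T @ [x])"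
      show "open_nbhd V E ((T @ [x]) ! i) - (\<Union>j<i. open_nbhd V E ((T @ [x]) ! j)) \<noteq> {}"
      proof (cases "i < length T")
        case True
        have eq: "(\<Union>j<i. open_nbhd V E ((T @ [x]) ! j)) = (\<Union>j<i. open_nbhd V E (T ! j))"
          using True by (auto simp: nth_append)
        show ?thesis using T(1) i True unfolding eq legal_open_seq_def by (simp add: nth_append)
      next
        case False
        hence ii: "i = length T" using i by simp
        have "w \<notin> (\<Union>j<i. open_nbhd V E ((T @ [x]) ! j))"
        proof
          assume "w \<in> (\<Union>j<i. open_nbhd V E ((T @ [x]) ! j))"
          then obtain j where j: "j < length T" "w \<in> open_nbhd V E (T ! j)" using ii by (auto simp: nth_append)
          have "T ! j \<in> set T" using j by simp
          have "E w (T ! j)" using j g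
            by (auto simp: open_nbhd_def simple_graph_def)
          thus False using w(2) nth_mem[OF j(1)] by blast
        qed
        moreover have "w \<in> open_nbhd V E ((T @ [x]) ! i)" using ii x w g
          by (auto simp: open_nbhd_def simple_graph_def)
        ultimately show ?thesis by blast
      qed
    qed
    hence "length (T @ [x]) \<le> Max (length ` ?L)" using fin by (metis (mono_tags) Max_ge finite_imageI imageI mem_Collect_eq)
    thus False using T by simp
  qed
  thus ?thesis using T unfolding total_dominating_seq_def by auto
qed

theorem mainTheorem16:
  fixes V :: "'a set" and E :: "'a \<Rightarrow> 'a \<Rightarrow> bool"
  assumes "simple_graph V E" and "no_isolated V E"
  shows "grundy_total_dom V E \<le> 2 * grundy_dom V E"
proof -
  note g = assms(1)
  have sym: "\<And>u v. E u v \<Longrightarrow> E v u" and inV: "\<And>u v. E u v \<Longrightarrow> u \<in> V \<and> v \<in> V"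
    using g by (auto simp: simple_graph_def)
  let ?L = "{S. total_dominating_seq V E S}"
  have finL: "finite ?L"
    by (rule finite_subset[OF _ fin_seqs[of V]])
       (use g in \<open>auto simp: total_dominating_seq_def legal_open_seq_def simple_graph_def\<close>)
  have neL: "length ` ?L \<noteq> {}" using total_exists[OF assms] by auto
  obtain S where S: "total_dominating_seq V E S" "length S = grundy_total_dom V E"
    using Max_in[OF finite_imageI[OF finL] neL] unfolding grundy_total_dom_def by auto
  have legS: "legal_open_seq V E S" using S(1) by (simp add: total_dominating_seq_def)
  have dS: "distinct S" and sS: "set S \<subseteq> V" using legS by (auto simp: legal_open_seq_def)
  define k where "k = length S"
  define Gd where "Gd = {i. i < k \<and> (i = 0 \<or> closed_nbhd V E (S ! i) - (\<Union>j<i. closed_nbhd V E (S ! j)) \<noteq> {})}"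
  define B where "B = {..<k} - Gd"
  have fp: "\<exists>u. u \<in> open_nbhd V E (S ! i) - (\<Union>j<i. open_nbhd V E (S ! j))" if "1 \<le> i" "i < k" for i
    using legS that unfolding legal_open_seq_def k_def by blast
  define u where "u i = (SOME u. u \<in> open_nbhd V E (S ! i) - (\<Union>j<i. open_nbhd V E (S ! j)))" for i
  have u: "u i \<in> open_nbhd V E (S ! i) - (\<Union>j<i. open_nbhd V E (S ! j))" if "1 \<le> i" "i < k" for i
    using someI_ex[OF fp[OF that]] unfolding u_def .
  have Bprop: "\<exists>j<i. u i = S ! j" if "i \<in> B" for i
  proof -
    have i: "i < k" "i \<noteq> 0" "closed_nbhd V E (S ! i) - (\<Union>j<i. closed_nbhd V E (S ! j)) = {}"
      using that unfolding B_def Gd_def by auto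
    have ui: "u i \<in> open_nbhd V E (S ! i) - (\<Union>j<i. open_nbhd V E (S ! j))" using u i by simp
    hence "u i \<in> closed_nbhd V E (S ! i)" by (simp add: closed_nbhd_def)
    with i(3) obtain j where j: "j < i" "u i \<in> closed_nbhd V E (S ! j)" by blast
    have "u i \<notin> open_nbhd V E (S ! j)" using ui j by blast
    hence "u i = S ! j" using j(2) by (simp add: closed_nbhd_def)
    thus ?thesis using j by blast
  qed
  define f where "f i = (SOME j. j < i \<and> u i = S ! j)" for i
  have f: "f i < i \<and> u i = S ! f i" if "i \<in> B" for i
    using someI_ex[OF Bprop[OF that]] unfolding f_def by simp
  have Bk: "i \<in> B \<Longrightarrow> i < k \<and> 1 \<le> i" for i unfolding B_def Gd_def by auto
  have injf: "inj_on f B"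
  proof (rule inj_onI)
    fix i i' assume a: "i \<in> B" "i' \<in> B" "f i = f i'"
    hence eq: "u i = u i'" using f by metis
    show "i = i'"
    proof (rule ccontr)
      assume "i \<noteq> i'"
      then consider "i < i'" | "i' < i" by linarith
      thus False
      proof cases
        case 1
        have "u i' \<notin> open_nbhd V E (S ! i)" using u[of i'] Bk[OF a(2)] 1 by blast
        moreover have "u i \<in> open_nbhd V E (S ! i)" using u[of i] Bk[OF a(1)] by blast
        ultimately show False using eq by simp
      next
        case 2
        have "u i \<notin> open_nbhd V E (S ! i')" using u[of i] Bk[OF a(1)] 2 by blast
        moreover have "u i' \<in> open_nbhd V E (S ! i')" using u[of i'] Bk[OF a(2)] by blast
        ultimately show False using eq by simp
      qed
    qed
  qed
  have fG: "f ` B \<subseteq> Gd"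
  proof
    fix j assume "j \<in> f ` B"
    then obtain i where i: "i \<in> B" "j = f i" by blast
    have ji: "j < i" "u i = S ! j" using f[OF i(1)] i(2) by auto
    have ik: "i < k" "1 \<le> i" using Bk[OF i(1)] by auto
    show "j \<in> Gd"
    proof (rule ccontr)
      assume "j \<notin> Gd"
      hence jB: "j \<in> B" using ji ik unfolding B_def by auto
      obtain l where l: "l < j" "u j = S ! l" using f[OF jB] by blast
      have "u j \<in> open_nbhd V E (S ! j)" using u[of j] Bk[OF jB] by blast
      hence "E (S ! j) (S ! l)" using l by (simp add: open_nbhd_def)
      hence "S ! j \<in> open_nbhd V E (S ! l)" using sym inV by (auto simp: open_nbhd_def)
      moreover have "u i \<notin> open_nbhd V E (S ! l)" using u[OF ik(2) ik(1)] l ji by auto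
      ultimately show False using ji by simp
    qed
  qed
  have finG: "finite Gd" unfolding Gd_def by simp
  have cardB: "card B \<le> card Gd" using card_inj_on_le[OF injf fG finG] .
  have Gsub: "Gd \<subseteq> {..<k}" unfolding Gd_def by auto
  have cardk: "k = card B + card Gd"
  proof -
    have "card {..<k} = card B + card Gd"
      unfolding B_def using card_Diff_subset[OF finG Gsub] card_mono[OF _ Gsub] by simp
    thus ?thesis by simp
  qed
  define idx where "idx = filter (\<lambda>i. i \<in> Gd) [0..<k]"
  define T where "T = map ((!) S) idx"
  have setidx: "set idx = Gd" unfolding idx_def using Gsub by auto
  have didx: "distinct idx" unfolding idx_def by simp
  have sidx: "sorted_wrt (<) idx" unfolding idx_def
    by (rule sorted_wrt_filter) (simp add: sorted_wrt_upt)
  have lenT: "length T = card Gd" unfolding T_def using distinct_card[OF didx] setidx by simp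
  have idxk: "\<And>m. m < length idx \<Longrightarrow> idx ! m < k"
    using setidx Gsub nth_mem by fastforce
  have legT: "legal_closed_seq V E T"
    unfolding legal_closed_seq_def
  proof (intro conjI allI impI)
    show "distinct T" unfolding T_def
    proof (rule distinct_map[THEN iffD2], intro conjI didx inj_onI)
      fix x y assume "x \<in> set idx" "y \<in> set idx" "S ! x = S ! y"
      thus "x = y" using setidx Gsub dS nth_eq_iff_index_eq unfolding k_def by blast
    qed
    show "set T \<subseteq> V"
    proof
      fix y assume "y \<in> set T"
      then obtain x where x: "x \<in> set idx" "y = S ! x" unfolding T_def by auto
      have "x < length S" using x(1) setidx Gsub k_def by auto
      thus "y \<in> V" using x(2) sS nth_mem by blast
    qed
    fix m assume m: "1 \<le> m \<and> m < length T"
    hence ml: "m < length idx" unfolding T_def by simp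
    have i0: "idx ! 0 < idx ! m" using sorted_wrt_nth_less[OF sidx, of 0 m] m ml by simp
    have iG: "idx ! m \<in> Gd" using setidx ml nth_mem by blast
    hence ne: "closed_nbhd V E (S ! (idx ! m)) - (\<Union>j<idx ! m. closed_nbhd V E (S ! j)) \<noteq> {}"
      using i0 unfolding Gd_def by auto
    have sub: "(\<Union>m'<m. closed_nbhd V E (T ! m')) \<subseteq> (\<Union>j<idx ! m. closed_nbhd V E (S ! j))"
    proof
      fix x assume "x \<in> (\<Union>m'<m. closed_nbhd V E (T ! m'))"
      then obtain m' where m': "m' < m" "x \<in> closed_nbhd V E (T ! m')" by blast
      have "idx ! m' < idx ! m" using sorted_wrt_nth_less[OF sidx m'(1) ml] .
      moreover have "T ! m' = S ! (idx ! m')" unfolding T_def using m' ml by simp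
      ultimately show "x \<in> (\<Union>j<idx ! m. closed_nbhd V E (S ! j))" using m' by auto
    qed
    have "T ! m = S ! (idx ! m)" unfolding T_def using ml by simp
    thus "closed_nbhd V E (T ! m) - (\<Union>j<m. closed_nbhd V E (T ! j)) \<noteq> {}"
      using ne sub by auto
  qed
  obtain D where D: "dominating_seq V E D" "length T \<le> length D"
    using closed_extend[OF g legT] by blast
  let ?M = "{S. dominating_seq V E S}"
  have finM: "finite ?M"
    by (rule finite_subset[OF _ fin_seqs[of V]])
       (use g in \<open>auto simp: dominating_seq_def legal_closed_seq_def simple_graph_def\<close>)
  have "length D \<le> grundy_dom V E" unfolding grundy_dom_def using D(1) finM by (simp add: Max_ge)
  hence "card Gd \<le> grundy_dom V E" using D lenT by simp
  thus ?thesis using S(2) cardk cardB k_def by linarith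
qed

end
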